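(* Let $\mathcal{A}\neq\Phi_\ell$ be a central hyperplane arrangement in $V=\mathbb{K}^\ell$ of rank $r$. Let $\pi=(\pi_1,\ldots,\pi_s)$ be a partition of $\mathcal{A}$, let $H_0\in\pi_1$ and let $(\mathcal{A},\mathcal{A}',\mathcal{A}'')$ be the triple associated with $H_0$. Then any two of the following statements imply the third: (i) $\pi$ is nice for $\mathcal{A}$; (ii) $\pi'$ is nice for $\mathcal{A}'$; (iii) the restriction map $\mathrm{R}:\mathcal{A}\setminus\pi_1\to\mathcal{A}''$ is bijective and $\pi''$ is nice for $\mathcal{A}''$.
   Context: $\mathbb{K}$ is a field; a central arrangement is a finite set of linear hyperplanes in $V$; $\Phi_\ell$ is the empty arrangement; the rank of $\mathcal{A}$ is the codimension of $\bigcap_{H\in\mathcal{A}}H$. $L(\mathcal{A})$ is the set of intersections of subsets of $\mathcal{A}$ ($V$ being the empty intersection); for $X\in L(\mathcal{A})$, $\mathcal{A}_X=\{H\in\mathcal{A}\mid X\subseteq H\}$. For $H_0\in\mathcal{A}$ the triple is $\mathcal{A}'=\mathcal{A}\setminus\{H_0\}$, $\mathcal{A}''=\{H_0\cap H\mid H\in\mathcal{A}'\}$ (an arrangement in $H_0$). A partition $\pi=(\pi_1,\ldots,\pi_s)$ of $\mathcal{A}$ (ordered tuple of non-empty disjoint subsets covering $\mathcal{A}$) is independent if for every choice $H_i\in\pi_i$, $\operatorname{codim}(H_1\cap\cdots\cap H_s)=s$; for $X\in L(\mathcal{A})$ the induced partition $\pi_X$ of $\mathcal{A}_X$ consists of the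 non-empty sets $\pi_i\cap\mathcal{A}_X$. $\pi$ is nice (a factorization) for $\mathcal{A}$ if it is independent and for every $X\in L(\mathcal{A})\setminus\{V\}$ some block of $\pi_X$ is a singleton (the empty partition is nice for an empty arrangement). For $H_0\in\pi_1$: $\pi'$ is the partition of $\mathcal{A}'$ by the non-empty sets $\pi_i\cap\mathcal{A}'$; $\mathrm{R}:\mathcal{A}\setminus\pi_1\to\mathcal{A}''$ is $H\mapsto H\cap H_0$; and $\pi''=(\pi_2'',\ldots,\pi_s'')$ with $\pi_i''=\mathrm{R}(\pi_i)$; "$\pi''$ is nice for $\mathcal{A}''$" includes that $\pi''$ is a partition of $\mathcal{A}''$. *)

theory Defs
  imports "HOL-Analysis.Analysis"
begin

text \<open>Vectors of V = K^l are elements of type 'k ^ 'n with 'k a field (l = CARD('n)).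
  All notions are stated relative to an ambient linear subspace W (W = UNIV for V itself,
  W = H0 for the restriction A''), so that codimensions and the empty intersection are
  taken inside W.\<close>

definition hyperplane_in :: "('k::field ^ 'n) set \<Rightarrow> ('k ^ 'n) set \<Rightarrow> bool" where
  "hyperplane_in W H \<longleftrightarrow> vec.subspace H \<and> H \<subseteq> W \<and> vec.dim H + 1 = vec.dim W"

definition central_arrangement_in :: "('k::field ^ 'n) set \<Rightarrow> ('k ^ 'n) set set \<Rightarrow> bool" where
  "central_arrangement_in W A \<longleftrightarrow> vec.subspace W \<and> finite A \<and> (\<forall>H\<in>A. hyperplane_in W H)"

definition codim_in :: "('k::field ^ 'n) set \<Rightarrow> ('k ^ 'n) set \<Rightarrow> nat" where
  "codim_in W X = vec.dim W - vec.dim X"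

definition lattice_in :: "('k::field ^ 'n) set \<Rightarrow> ('k ^ 'n) set set \<Rightarrow> ('k ^ 'n) set set" where
  "lattice_in W A = {W \<inter> \<Inter> B | B. B \<subseteq> A}"

definition localization :: "('k::field ^ 'n) set set \<Rightarrow> ('k ^ 'n) set \<Rightarrow> ('k ^ 'n) set set" where
  "localization A X = {H \<in> A. X \<subseteq> H}"

definition is_partition :: "'a set list \<Rightarrow> 'a set \<Rightarrow> bool" where
  "is_partition \<pi> A \<longleftrightarrow> (\<forall>B\<in>set \<pi>. B \<noteq> {}) \<and>
     (\<forall>i<length \<pi>. \<forall>j<length \<pi>. i \<noteq> j \<longrightarrow> \<pi> ! i \<inter> \<pi> ! j = {}) \<and> \<Union> (set \<pi>) = A"

definition independent_in :: "('k::field ^ 'n) set \<Rightarrow> ('k ^ 'n) set set list \<Rightarrow> bool" where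
  "independent_in W \<pi> \<longleftrightarrow>
     (\<forall>h. (\<forall>i<length \<pi>. h i \<in> \<pi> ! i) \<longrightarrow>
          codim_in W (W \<inter> \<Inter> (h ` {..<length \<pi>})) = length \<pi>)"

text \<open>Nice partition (factorization). The blocks of the induced partition pi_X are the
  non-empty sets pi_i \<inter> A_X; "some block of pi_X is a singleton" is expressed directly.\<close>
definition nice_in :: "('k::field ^ 'n) set \<Rightarrow> ('k ^ 'n) set set \<Rightarrow> ('k ^ 'n) set set list \<Rightarrow> bool" where
  "nice_in W A \<pi> \<longleftrightarrow> is_partition \<pi> A \<and> independent_in W \<pi> \<and>
     (\<forall>X \<in> lattice_in W A - {W}. \<exists>B\<in>set \<pi>. card (B \<inter> localization A X) = 1)"

definition deletion_partition :: "'a set list \<Rightarrow> 'a \<Rightarrow> 'a set list" where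
  "deletion_partition \<pi> H0 = filter (\<lambda>B. B \<noteq> {}) (map (\<lambda>B. B - {H0}) \<pi>)"

definition restriction_arr :: "('k::field ^ 'n) set set \<Rightarrow> ('k ^ 'n) set \<Rightarrow> ('k ^ 'n) set set" where
  "restriction_arr A H0 = {H0 \<inter> H | H. H \<in> A - {H0}}"

definition restriction_partition :: "('k::field ^ 'n) set set list \<Rightarrow> ('k ^ 'n) set \<Rightarrow> ('k ^ 'n) set set list" where
  "restriction_partition \<pi> H0 = map (\<lambda>B. (\<lambda>H. H \<inter> H0) ` B) (tl \<pi>)"

end

theory Submission imports Defs begin

lemma dim_int_hyp:
  fixes Y H :: "('k::field ^ 'n) set"
  assumes "vec.subspace Y" "hyperplane_in UNIV H"
  shows "vec.dim Y \<le> vec.dim (Y \<inter> H) + 1"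
proof -
  have s: "vec.subspace H" "vec.dim H + 1 = vec.dim (UNIV::('k^'n) set)" using assms(2) by (auto simp: hyperplane_in_def)
  have "vec.dim {x + y |x y. x \<in> Y \<and> y \<in> H} + vec.dim (Y \<inter> H) = vec.dim Y + vec.dim H"
    by (rule vec.dim_sums_Int[OF assms(1) s(1)])
  moreover have "vec.dim {x + y |x y. x \<in> Y \<and> y \<in> H} \<le> vec.dim (UNIV::('k^'n) set)"
    by (rule vec.dim_subset) simp
  ultimately show ?thesis using s by linarith
qed

lemma dim_int_hyp_strict:
  fixes Y H :: "('k::field ^ 'n) set"
  assumes "vec.subspace Y" "hyperplane_in UNIV H" "\<not> Y \<subseteq> H"
  shows "vec.dim (Y \<inter> H) + 1 = vec.dim Y"
proof -
  have s: "vec.subspace H" "vec.dim H + 1 = vec.dim (UNIV::('k^'n) set)" using assms(2) by (auto simp: hyperplane_in_def)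
  define S where "S = {x + y |x y. x \<in> Y \<and> y \<in> H}"
  have e: "vec.dim S + vec.dim (Y \<inter> H) = vec.dim Y + vec.dim H"
    unfolding S_def by (rule vec.dim_sums_Int[OF assms(1) s(1)])
  have le: "vec.dim S \<le> vec.dim (UNIV::('k^'n) set)"
    by (rule vec.dim_subset) simp
  have sS: "vec.subspace S" unfolding S_def by (rule vec.subspace_sums[OF assms(1) s(1)])
  have HS: "H \<subseteq> S" unfolding S_def
  proof
    fix x assume "x \<in> H" then show "x \<in> {x + y |x y. x \<in> Y \<and> y \<in> H}"
      using vec.subspace_0[OF assms(1)] by (metis (mono_tags, lifting) add_0 mem_Collect_eq)
  qed
  have YS: "Y \<subseteq> S" unfolding S_def
  proof
    fix x assume "x \<in> Y" then show "x \<in> {x + y |x y. x \<in> Y \<and> y \<in> H}"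
      using vec.subspace_0[OF s(1)] by (metis (mono_tags, lifting) add_0_right mem_Collect_eq)
  qed
  have "\<not> vec.dim S \<le> vec.dim H"
  proof
    assume "vec.dim S \<le> vec.dim H"
    then have "H = S" using vec.subspace_dim_equal[OF s(1) sS HS] by simp
    then show False using YS assms(3) by simp
  qed
  then show ?thesis using e le s by linarith
qed

lemma hyp_eq:
  fixes H K :: "('k::field ^ 'n) set"
  assumes "hyperplane_in UNIV H" "hyperplane_in UNIV K" "H \<subseteq> K"
  shows "H = K"
  using assms vec.subspace_dim_equal[of H K] by (auto simp: hyperplane_in_def)

lemma hyp_ne_UNIV:
  fixes H :: "('k::field ^ 'n) set"
  assumes "hyperplane_in UNIV H" shows "H \<noteq> UNIV"
  using assms by (auto simp: hyperplane_in_def)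

lemma subspace_Inter_hyps:
  fixes F :: "('k::field ^ 'n) set set"
  assumes "\<forall>H\<in>F. hyperplane_in UNIV H"
  shows "vec.subspace (\<Inter>F)"
  using assms by (intro vec.subspace_Inter) (auto simp: hyperplane_in_def)

lemma codim_card:
  fixes F :: "('k::field ^ 'n) set set"
  assumes "finite F" "\<forall>H\<in>F. hyperplane_in UNIV H"
  shows "vec.dim (UNIV::('k^'n) set) \<le> vec.dim (\<Inter>F) + card F"
  using assms
proof (induction F rule: finite_induct)
  case empty then show ?case by simp
next
  case (insert H F)
  have "vec.dim (\<Inter>F) \<le> vec.dim (\<Inter>F \<inter> H) + 1"
    using dim_int_hyp[OF subspace_Inter_hyps] insert by auto
  then show ?case using insert by (simp add: Int_commute)
qed

lemma is_partition_alt: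
  "is_partition L S \<longleftrightarrow> (\<forall>B\<in>set L. B \<noteq> {}) \<and> distinct L \<and>
     (\<forall>B\<in>set L. \<forall>C\<in>set L. B \<noteq> C \<longrightarrow> B \<inter> C = {}) \<and> \<Union>(set L) = S"
proof
  assume a: "is_partition L S"
  have d: "distinct L"
    unfolding distinct_conv_nth
  proof (intro allI impI)
    fix i j assume ij: "i < length L" "j < length L" "i \<noteq> j"
    show "L ! i \<noteq> L ! j"
    proof
      assume "L ! i = L ! j"
      moreover have "L ! i \<inter> L ! j = {}" using a ij unfolding is_partition_def by blast
      ultimately have "L ! i = {}" by simp
      then show False using a ij(1) unfolding is_partition_def by (metis nth_mem)
    qed
  qed
  have "\<forall>B\<in>set L. \<forall>C\<in>set L. B \<noteq> C \<longrightarrow> B \<inter> C = {}"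
    using a unfolding is_partition_def by (metis in_set_conv_nth)
  then show "(\<forall>B\<in>set L. B \<noteq> {}) \<and> distinct L \<and>
     (\<forall>B\<in>set L. \<forall>C\<in>set L. B \<noteq> C \<longrightarrow> B \<inter> C = {}) \<and> \<Union>(set L) = S"
    using a d unfolding is_partition_def by blast
next
  assume "(\<forall>B\<in>set L. B \<noteq> {}) \<and> distinct L \<and>
     (\<forall>B\<in>set L. \<forall>C\<in>set L. B \<noteq> C \<longrightarrow> B \<inter> C = {}) \<and> \<Union>(set L) = S"
  then show "is_partition L S" unfolding is_partition_def
    by (auto simp: nth_eq_iff_index_eq)
qed

lemma lat_eq:
  fixes S :: "('k::field ^ 'n) set set"
  assumes "X \<in> lattice_in UNIV S"
  shows "X = UNIV \<inter> \<Inter>(localization S X)"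
proof -
  obtain B where B: "B \<subseteq> S" "X = UNIV \<inter> \<Inter>B" using assms unfolding lattice_in_def by blast
  then have "B \<subseteq> localization S X" unfolding localization_def by auto
  then have "\<Inter>(localization S X) \<subseteq> X" using B by auto
  moreover have "X \<subseteq> \<Inter>(localization S X)" unfolding localization_def by auto
  ultimately show ?thesis by auto
qed

lemma lat_closure:
  fixes S :: "('k::field ^ 'n) set set"
  assumes "K \<in> S" "X \<subseteq> K" "K \<noteq> UNIV"
  defines "Z \<equiv> UNIV \<inter> \<Inter>(localization S X)"
  shows "Z \<in> lattice_in UNIV S - {UNIV}" "localization S Z = localization S X" "X \<subseteq> Z"
proof -
  have "Z \<in> lattice_in UNIV S" unfolding Z_def lattice_in_def localization_def by blast
  moreover have "Z \<subseteq> K" using assms unfolding Z_def localization_def by auto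
  ultimately show "Z \<in> lattice_in UNIV S - {UNIV}" using assms by auto
  show "X \<subseteq> Z" unfolding Z_def localization_def by auto
  then show "localization S Z = localization S X"
    unfolding localization_def Z_def by auto
qed

lemma lat_mono: "S \<subseteq> T \<Longrightarrow> X \<in> lattice_in W S \<Longrightarrow> X \<in> lattice_in W T"
  unfolding lattice_in_def by blast

lemma loc_diff: "localization (S - {H}) X = localization S X - {H}"
  unfolding localization_def by auto

lemma transversal_ext:
  assumes "\<forall>i<length L. L ! i \<noteq> {}"
  shows "\<exists>h. (\<forall>i<length L. h i \<in> L ! i) \<and> (\<forall>i<length L. f i \<in> L ! i \<longrightarrow> h i = f i)"
proof -
  define h where "h i = (if f i \<in> L ! i then f i else SOME y. y \<in> L ! i)" for i
  have "\<forall>i<length L. h i \<in> L ! i" using assms unfolding h_def by (auto simp: some_in_eq)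
  then show ?thesis unfolding h_def by auto
qed

lemma Inter_shift:
  assumes "0 < n"
  shows "\<Inter>(g ` {..<n}) = g 0 \<inter> \<Inter>((\<lambda>i. g (Suc i)) ` {..<n - 1})"
proof -
  have "{..<n} = insert 0 (Suc ` {..<n - 1})" using assms
    by (metis Suc_pred' lessThan_Suc_eq_insert_0)
  then show ?thesis by (simp add: image_image)
qed

lemma lat_intro: "B \<subseteq> S \<Longrightarrow> X = W \<inter> \<Inter>B \<Longrightarrow> X \<in> lattice_in W S"
  unfolding lattice_in_def by blast

lemma INT_two: "i \<in> I \<Longrightarrow> j \<in> I \<Longrightarrow> \<Inter>(h ` I) \<subseteq> h i \<inter> h j"
  by auto

lemma card_ne1: "finite S \<Longrightarrow> x \<in> S \<Longrightarrow> y \<in> S \<Longrightarrow> x \<noteq> y \<Longrightarrow> card S \<noteq> 1"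
  by (auto simp: card_1_singleton_iff)

locale ctx =
  fixes A :: "('k::field ^ 'n) set set" and \<pi> :: "('k ^ 'n) set set list" and H0 :: "('k ^ 'n) set"
  assumes arr: "central_arrangement_in UNIV A"
    and part: "is_partition \<pi> A"
    and ne: "\<pi> \<noteq> []" and H0: "H0 \<in> \<pi> ! 0"
begin

abbreviation "s \<equiv> length \<pi>"

lemma s_pos: "0 < s" using ne by simp

lemma finA: "finite A" using arr by (simp add: central_arrangement_in_def)
lemma hypA: "H \<in> A \<Longrightarrow> hyperplane_in UNIV H" using arr by (simp add: central_arrangement_in_def)

lemma blk_sub: "i < s \<Longrightarrow> \<pi> ! i \<subseteq> A"
  using part unfolding is_partition_def by (metis Union_upper nth_mem)
lemma blk_ne: "i < s \<Longrightarrow> \<pi> ! i \<noteq> {}"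
  using part unfolding is_partition_def by (metis nth_mem)
lemma blk_uniq: "i < s \<Longrightarrow> j < s \<Longrightarrow> H \<in> \<pi> ! i \<Longrightarrow> H \<in> \<pi> ! j \<Longrightarrow> i = j"
  using part unfolding is_partition_def by blast
lemma cover: "H \<in> A \<Longrightarrow> \<exists>i<s. H \<in> \<pi> ! i"
  using part unfolding is_partition_def by (metis UnionE in_set_conv_nth)
lemma H0A: "H0 \<in> A" using H0 blk_sub s_pos by blast
lemma H0_not: "0 < i \<Longrightarrow> i < s \<Longrightarrow> H0 \<notin> \<pi> ! i"
  using blk_uniq[of i 0 H0] H0 s_pos by auto
lemma hypH0: "hyperplane_in UNIV H0" using hypA H0A by blast

lemma A_minus: "H \<in> A - \<pi> ! 0 \<longleftrightarrow> (\<exists>i. 0 < i \<and> i < s \<and> H \<in> \<pi> ! i)"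
proof
  assume "H \<in> A - \<pi> ! 0"
  then obtain i where "i < s" "H \<in> \<pi> ! i" "H \<notin> \<pi> ! 0" using cover by blast
  then show "\<exists>i. 0 < i \<and> i < s \<and> H \<in> \<pi> ! i" by (metis gr0I)
next
  assume "\<exists>i. 0 < i \<and> i < s \<and> H \<in> \<pi> ! i"
  then obtain i where i: "0 < i" "i < s" "H \<in> \<pi> ! i" by blast
  then have "H \<in> A" using blk_sub by blast
  moreover have "H \<notin> \<pi> ! 0" using blk_uniq[of i 0 H] i s_pos by auto
  ultimately show "H \<in> A - \<pi> ! 0" by blast
qed

lemma blk_set: "B \<in> set \<pi> \<longleftrightarrow> (\<exists>i<s. B = \<pi> ! i)"
  by (auto simp: in_set_conv_nth)

lemma deletion_eq:
  "deletion_partition \<pi> H0 = (if \<pi> ! 0 = {H0} then tl \<pi> else (\<pi> ! 0 - {H0}) # tl \<pi>)"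
proof -
  obtain p r where pr: "\<pi> = p # r" using ne by (cases \<pi>) simp_all
  have alt: "(\<forall>B\<in>set \<pi>. B \<noteq> {}) \<and> distinct \<pi> \<and>
     (\<forall>B\<in>set \<pi>. \<forall>C\<in>set \<pi>. B \<noteq> C \<longrightarrow> B \<inter> C = {})"
    using part[unfolded is_partition_alt] by (elim conjE) (intro conjI)
  have "\<forall>B\<in>set r. H0 \<notin> B"
  proof
    fix B assume B: "B \<in> set r"
    have "p \<notin> set r" using alt pr by simp
    then have "p \<noteq> B" using B by blast
    moreover have "p \<in> set \<pi>" "B \<in> set \<pi>" using pr B by auto
    ultimately have "p \<inter> B = {}" using alt by blast
    moreover have "H0 \<in> p" using H0 pr by simp
    ultimately show "H0 \<notin> B" by blast
  qed
  then have m: "map (\<lambda>B. B - {H0}) r = r" by (induction r) auto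
  have f: "filter (\<lambda>B. B \<noteq> {}) r = r" using alt pr by (auto simp: filter_id_conv)
  show ?thesis using H0 pr m f by (auto simp: deletion_partition_def)
qed


abbreviation "A1 \<equiv> A - {H0}"
abbreviation "A2 \<equiv> restriction_arr A H0"
abbreviation R where "R H \<equiv> H \<inter> H0"
abbreviation "\<pi>1 \<equiv> deletion_partition \<pi> H0"
abbreviation "\<pi>2 \<equiv> restriction_partition \<pi> H0"

lemma len2: "length \<pi>2 = s - 1" by (simp add: restriction_partition_def)
lemma nth2: "i < s - 1 \<Longrightarrow> \<pi>2 ! i = (\<lambda>H. R H) ` (\<pi> ! Suc i)"
  by (simp add: restriction_partition_def nth_tl)
lemma set2: "B \<in> set \<pi>2 \<longleftrightarrow> (\<exists>i. 0 < i \<and> i < s \<and> B = (\<lambda>H. R H) ` (\<pi> ! i))"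
proof
  assume "B \<in> set \<pi>2"
  then obtain j where "j < s - 1" "B = \<pi>2 ! j" by (metis in_set_conv_nth len2)
  then show "\<exists>i. 0 < i \<and> i < s \<and> B = (\<lambda>H. R H) ` (\<pi> ! i)" using nth2 by (intro exI[of _ "Suc j"]) auto
next
  assume "\<exists>i. 0 < i \<and> i < s \<and> B = (\<lambda>H. R H) ` (\<pi> ! i)"
  then obtain i where i: "0 < i" "i < s" "B = (\<lambda>H. R H) ` (\<pi> ! i)" by blast
  then have "i - 1 < s - 1" "\<pi>2 ! (i - 1) = B" using nth2[of "i - 1"] by auto
  then show "B \<in> set \<pi>2" by (metis len2 nth_mem)
qed

lemma A2_mem: "G \<in> A2 \<longleftrightarrow> (\<exists>H\<in>A1. G = R H)"
  unfolding restriction_arr_def by auto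

lemma loc_R:
  assumes "0 < i" "i < s" "Y \<subseteq> H0"
  shows "(\<lambda>H. R H) ` (\<pi> ! i) \<inter> localization A2 Y = (\<lambda>H. R H) ` (\<pi> ! i \<inter> localization A Y)"
proof -
  have sub: "\<pi> ! i \<subseteq> A1" using blk_sub H0_not assms by blast
  show ?thesis
  proof
    show "(\<lambda>H. R H) ` (\<pi> ! i) \<inter> localization A2 Y \<subseteq> (\<lambda>H. R H) ` (\<pi> ! i \<inter> localization A Y)"
      using sub unfolding localization_def by auto
    show "(\<lambda>H. R H) ` (\<pi> ! i \<inter> localization A Y) \<subseteq> (\<lambda>H. R H) ` (\<pi> ! i) \<inter> localization A2 Y"
      using sub assms(3) unfolding localization_def A2_mem by auto
  qed
qed

lemma card_loc_R:
  assumes "inj_on (\<lambda>H. R H) (A - \<pi> ! 0)" "0 < i" "i < s" "Y \<subseteq> H0"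
  shows "card ((\<lambda>H. R H) ` (\<pi> ! i) \<inter> localization A2 Y) = card (\<pi> ! i \<inter> localization A Y)"
proof -
  have "\<pi> ! i \<inter> localization A Y \<subseteq> A - \<pi> ! 0" using A_minus assms(2,3) blk_sub by blast
  then have "inj_on (\<lambda>H. R H) (\<pi> ! i \<inter> localization A Y)" using assms(1) inj_on_subset by blast
  then show ?thesis using loc_R[OF assms(2-4)] card_image by metis
qed

lemma latR_to_A:
  assumes "Y \<in> lattice_in H0 A2"
  shows "Y \<in> lattice_in UNIV A" "Y \<subseteq> H0"
proof -
  obtain B where B: "B \<subseteq> A2" "Y = H0 \<inter> \<Inter>B" using assms unfolding lattice_in_def by blast
  define C where "C = {H \<in> A1. R H \<in> B}"
  have "Y = UNIV \<inter> \<Inter>(insert H0 C)"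
  proof
    show "Y \<subseteq> UNIV \<inter> \<Inter>(insert H0 C)"
    proof
      fix x assume "x \<in> Y"
      then have x: "x \<in> H0" "\<forall>b\<in>B. x \<in> b" using B(2) by auto
      have hx: "x \<in> H" if "H \<in> C" for H
      proof -
        have "R H \<in> B" using that unfolding C_def by simp
        then have "x \<in> H \<inter> H0" by (rule bspec[OF x(2)])
        then show ?thesis by (rule IntD1)
      qed
      show "x \<in> UNIV \<inter> \<Inter>(insert H0 C)" using x(1) hx by simp
    qed
    show "UNIV \<inter> \<Inter>(insert H0 C) \<subseteq> Y"
    proof
      fix x assume x: "x \<in> UNIV \<inter> \<Inter>(insert H0 C)"
      have "x \<in> b" if "b \<in> B" for b
      proof -
        have "b \<in> A2" using that B(1) by (rule subsetD[rotated])
        then obtain H where H: "H \<in> A1" "b = R H" unfolding A2_mem by (elim bexE)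
        then have "H \<in> C" using that unfolding C_def by simp
        then have "x \<in> H" using x by simp
        moreover have "x \<in> H0" using x by simp
        ultimately show ?thesis using H(2) by simp
      qed
      then show "x \<in> Y" using x B(2) by simp
    qed
  qed
  moreover have "insert H0 C \<subseteq> A" using H0A unfolding C_def by auto
  ultimately show "Y \<in> lattice_in UNIV A" unfolding lattice_in_def by blast
  show "Y \<subseteq> H0" using B by auto
qed

lemma lat_to_R:
  assumes "X \<in> lattice_in UNIV A" "X \<subseteq> H0"
  shows "X \<in> lattice_in H0 A2"
proof -
  obtain B where B: "B \<subseteq> A" "X = UNIV \<inter> \<Inter>B" using assms unfolding lattice_in_def by blast
  define C where "C = (\<lambda>H. R H) ` (B - {H0})"
  have "C \<subseteq> A2"
  proof
    fix G assume "G \<in> C"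
    then obtain H where "H \<in> B - {H0}" "G = R H" unfolding C_def by blast
    then show "G \<in> A2" using B(1) A2_mem by blast
  qed
  moreover have "X = H0 \<inter> \<Inter>(B - {H0})" using B assms(2) by auto
  moreover have "H0 \<inter> \<Inter>(B - {H0}) = H0 \<inter> \<Inter>C" unfolding C_def by auto
  ultimately show ?thesis unfolding lattice_in_def by auto
qed

lemma lat_to_A1:
  assumes "X \<in> lattice_in UNIV A" "H0 \<notin> localization A X"
  shows "X \<in> lattice_in UNIV A1"
proof -
  have "localization A X \<subseteq> A1" using assms(2) unfolding localization_def by auto
  then show ?thesis using lat_eq[OF assms(1)] unfolding lattice_in_def by blast
qed

lemma blocks_ne: "\<forall>i<s. \<pi> ! i \<noteq> {}" using blk_ne by blast

lemma indep_redundant: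
  assumes ind: "independent_in UNIV \<pi>" and h: "\<forall>i<s. h i \<in> \<pi> ! i" and m: "m < s"
    and sub: "\<Inter>(h ` ({..<s} - {m})) \<subseteq> h m"
  shows False
proof -
  define F where "F = h ` ({..<s} - {m})"
  have eq: "\<Inter>(h ` {..<s}) = \<Inter>F"
  proof -
    have "{..<s} = insert m ({..<s} - {m})" using m by auto
    then have "\<Inter>(h ` {..<s}) = h m \<inter> \<Inter>F" unfolding F_def by (metis INT_insert)
    then show ?thesis using sub unfolding F_def by auto
  qed
  have hF: "\<forall>H\<in>F. hyperplane_in UNIV H" using h blk_sub hypA unfolding F_def by blast
  have "card F \<le> card ({..<s} - {m})" unfolding F_def by (rule card_image_le) simp
  also have "\<dots> = s - 1" using m by simp
  finally have cF: "card F \<le> s - 1" .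
  have "vec.dim (UNIV::('k^'n) set) \<le> vec.dim (\<Inter>F) + card F" using codim_card[OF _ hF] unfolding F_def by simp
  moreover have "codim_in UNIV (UNIV \<inter> \<Inter>(h ` {..<s})) = s" using ind h unfolding independent_in_def by blast
  ultimately have "vec.dim (UNIV::('k^'n) set) - vec.dim (\<Inter>F) = s" "vec.dim (UNIV::('k^'n) set) \<le> vec.dim (\<Inter>F) + card F"
    using eq unfolding codim_in_def by simp_all
  then show False using cF s_pos by arith
qed

lemma codim_bridge:
  assumes "Y \<subseteq> H0" "vec.subspace Y"
  shows "codim_in UNIV Y = codim_in H0 Y + 1"
proof -
  have "vec.dim Y \<le> vec.dim H0" using assms vec.dim_subset by blast
  moreover have "vec.dim H0 + 1 = vec.dim (UNIV::('k^'n) set)" using hypH0 by (simp add: hyperplane_in_def)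
  ultimately show ?thesis unfolding codim_in_def by simp
qed

lemma subspace_transv: "\<forall>i\<in>I. h i \<in> A \<Longrightarrow> vec.subspace (\<Inter>(h ` I))"
  using subspace_Inter_hyps hypA by blast


lemma del_block: "B' \<in> set \<pi>1 \<Longrightarrow> \<exists>m<s. B' = \<pi> ! m - {H0}"
  unfolding deletion_partition_def by (auto simp: in_set_conv_nth)

lemma del_block_in: "m < s \<Longrightarrow> \<pi> ! m - {H0} \<noteq> {} \<Longrightarrow> \<pi> ! m - {H0} \<in> set \<pi>1"
  unfolding deletion_partition_def by auto

lemma finloc: "finite (B \<inter> localization A X)"
  using finA unfolding localization_def by auto

lemma inj1:
  assumes P1: "nice_in UNIV A \<pi>" and P2: "nice_in UNIV A1 \<pi>1"
  shows "inj_on (\<lambda>H. R H) (A - \<pi> ! 0)"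
proof (rule inj_onI, rule ccontr)
  fix K1 K2 assume K1: "K1 \<in> A - \<pi> ! 0" and K2: "K2 \<in> A - \<pi> ! 0" and eq: "R K1 = R K2" and ne: "K1 \<noteq> K2"
  have ind: "independent_in UNIV \<pi>" using P1 by (simp add: nice_in_def)
  obtain a where a: "0 < a" "a < s" "K1 \<in> \<pi> ! a" using K1 A_minus by blast
  obtain b where b: "0 < b" "b < s" "K2 \<in> \<pi> ! b" using K2 A_minus by blast
  have XK2: "H0 \<inter> K1 \<subseteq> K2" using eq by auto
  show False
  proof (cases "a = b")
    case False
    define f where "f = (\<lambda>i::nat. if i = 0 then H0 else if i = a then K1 else K2)"
    from transversal_ext[OF blocks_ne, of f] obtain h where h: "\<forall>i<s. h i \<in> \<pi> ! i"
      "\<forall>i<s. f i \<in> \<pi> ! i \<longrightarrow> h i = f i" by blast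
    have h0: "h 0 = H0" using spec[OF h(2), of 0] s_pos H0 unfolding f_def by simp
    have ha: "h a = K1" using spec[OF h(2), of a] a unfolding f_def by simp
    have hb: "h b = K2" using spec[OF h(2), of b] b False unfolding f_def by simp
    have "\<Inter>(h ` ({..<s} - {b})) \<subseteq> h 0 \<inter> h a" by (rule INT_two) (use a b False s_pos in auto)
    then have "\<Inter>(h ` ({..<s} - {b})) \<subseteq> h b" using h0 ha hb XK2 by auto
    then show False using indep_redundant[OF ind h(1) b(2)] by blast
  next
    case True
    define X where "X = H0 \<inter> K1"
    have XK2': "X \<subseteq> K2" using XK2 X_def by simp
    have other: "\<pi> ! m \<inter> localization A X = {}" if m: "m < s" "m \<noteq> 0" "m \<noteq> a" for m
    proof (rule ccontr)
      assume "\<pi> ! m \<inter> localization A X \<noteq> {}"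
      then obtain H where H: "H \<in> \<pi> ! m" "X \<subseteq> H" unfolding localization_def by auto
      define f where "f = (\<lambda>i::nat. if i = 0 then H0 else if i = a then K1 else H)"
      from transversal_ext[OF blocks_ne, of f] obtain h where h: "\<forall>i<s. h i \<in> \<pi> ! i"
        "\<forall>i<s. f i \<in> \<pi> ! i \<longrightarrow> h i = f i" by blast
      have h0: "h 0 = H0" using spec[OF h(2), of 0] s_pos H0 unfolding f_def by simp
      have ha: "h a = K1" using spec[OF h(2), of a] a unfolding f_def by simp
      have hm: "h m = H" using spec[OF h(2), of m] m H unfolding f_def by simp
      have "\<Inter>(h ` ({..<s} - {m})) \<subseteq> h 0 \<inter> h a" by (rule INT_two) (use a m s_pos in auto)
      then have "\<Inter>(h ` ({..<s} - {m})) \<subseteq> h m" using h0 ha hm H X_def by auto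
      then show False using indep_redundant[OF ind h(1) m(1)] by blast
    qed
    have K1A: "K1 \<in> A" "K1 \<notin> \<pi> ! 0" using K1 by auto
    have K2A: "K2 \<in> A" "K2 \<notin> \<pi> ! 0" using K2 by auto
    have H0ne: "K1 \<noteq> H0" "K2 \<noteq> H0" using K1A K2A H0 by auto
    have XL: "X \<in> lattice_in UNIV A - {UNIV}"
    proof -
      have "X = UNIV \<inter> \<Inter>{H0, K1}" unfolding X_def by simp
      moreover have "{H0, K1} \<subseteq> A" using H0A K1A(1) by simp
      ultimately have "X \<in> lattice_in UNIV A" using lat_intro by metis
      moreover have "X \<subseteq> H0" unfolding X_def by simp
      ultimately show ?thesis using hyp_ne_UNIV[OF hypH0] by blast
    qed
    then obtain B where B: "B \<in> set \<pi>" "card (B \<inter> localization A X) = 1"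
      using P1 unfolding nice_in_def by blast
    then obtain m where m: "m < s" "B = \<pi> ! m" using blk_set by blast
    have inA: "K1 \<in> \<pi> ! a \<inter> localization A X" "K2 \<in> \<pi> ! a \<inter> localization A X"
      using a b True K1A K2A XK2' unfolding localization_def X_def by auto
    have "m = 0"
    proof (rule ccontr)
      assume "m \<noteq> 0"
      show False
      proof (cases "m = a")
        case True
        then show ?thesis using card_ne1[OF finloc inA ne] B m by simp
      next
        case False
        then show ?thesis using other[OF m(1) \<open>m \<noteq> 0\<close> False] B m by simp
      qed
    qed
    have H0X: "H0 \<in> \<pi> ! 0 \<inter> localization A X" using H0 H0A unfolding localization_def X_def by auto
    have P0: "\<pi> ! 0 \<inter> localization A X = {H0}"
      using B m \<open>m = 0\<close> H0X by (auto simp: card_1_singleton_iff)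
    obtain Z where Z: "Z \<in> lattice_in UNIV A1 - {UNIV}" "localization A1 Z = localization A1 X"
      using lat_closure[of K1 A1 X] K1A H0ne hyp_ne_UNIV[OF hypA[OF K1A(1)]] X_def by blast
    have "\<exists>B'\<in>set \<pi>1. card (B' \<inter> localization A1 Z) = 1"
      using P2 Z(1) unfolding nice_in_def by blast
    then obtain B' where B': "B' \<in> set \<pi>1" "card (B' \<inter> localization A1 X) = 1"
      using Z(2) by auto
    then obtain m' where m': "m' < s" "B' = \<pi> ! m' - {H0}" using del_block by blast
    have eqB: "B' \<inter> localization A1 X = (\<pi> ! m' \<inter> localization A X) - {H0}"
      using m' loc_diff by auto
    show False
    proof (cases "m' = 0")
      case True
      then show ?thesis using eqB P0 B' by simp
    next
      case m'0: False
      show ?thesis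
      proof (cases "m' = a")
        case True
        have "K1 \<in> B' \<inter> localization A1 X" "K2 \<in> B' \<inter> localization A1 X" using eqB inA H0ne True by auto
        moreover have "finite (B' \<inter> localization A1 X)" using finA unfolding localization_def by auto
        ultimately show ?thesis using card_ne1[of "B' \<inter> localization A1 X" K1 K2] ne B'(2) by blast
      next
        case False
        then show ?thesis using other[OF m'(1) m'0 False] eqB B' by simp
      qed
    qed
  qed
qed

lemma surj1:
  assumes P1: "nice_in UNIV A \<pi>"
  shows "(\<lambda>H. R H) ` (A - \<pi> ! 0) = A2"
proof
  show "(\<lambda>H. R H) ` (A - \<pi> ! 0) \<subseteq> A2" using H0 A2_mem by auto
  show "A2 \<subseteq> (\<lambda>H. R H) ` (A - \<pi> ! 0)"
  proof
    fix G assume "G \<in> A2"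
    then obtain H where H: "H \<in> A1" "G = R H" using A2_mem by blast
    show "G \<in> (\<lambda>H. R H) ` (A - \<pi> ! 0)"
    proof (cases "H \<in> \<pi> ! 0")
      case False
      then show ?thesis using H by auto
    next
      case True
      define X where "X = H \<inter> H0"
      have XL: "X \<in> lattice_in UNIV A - {UNIV}"
      proof -
        have "X = UNIV \<inter> \<Inter>{H0, H}" unfolding X_def by auto
        moreover have "{H0, H} \<subseteq> A" using H0A H by simp
        ultimately have "X \<in> lattice_in UNIV A" using lat_intro by metis
        moreover have "X \<subseteq> H0" unfolding X_def by simp
        ultimately show ?thesis using hyp_ne_UNIV[OF hypH0] by blast
      qed
      then obtain B where B: "B \<in> set \<pi>" "card (B \<inter> localization A X) = 1"
        using P1 unfolding nice_in_def by blast
      then obtain m where m: "m < s" "B = \<pi> ! m" using blk_set by blast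
      have "m \<noteq> 0"
      proof
        assume "m = 0"
        have "H \<in> \<pi> ! 0 \<inter> localization A X" "H0 \<in> \<pi> ! 0 \<inter> localization A X"
          using True H H0 H0A unfolding localization_def X_def by auto
        moreover have "H \<noteq> H0" using H by auto
        ultimately show False using card_ne1[OF finloc] B m \<open>m = 0\<close> by blast
      qed
      obtain K where K: "\<pi> ! m \<inter> localization A X = {K}" using B m by (auto simp: card_1_singleton_iff)
      then have KA: "K \<in> A - \<pi> ! 0" "X \<subseteq> K" using A_minus m \<open>m \<noteq> 0\<close> unfolding localization_def by auto
      have KH0: "K \<noteq> H0" using KA H0 by auto
      have hK: "hyperplane_in UNIV K" "hyperplane_in UNIV H" using KA H hypA by auto
      have sH0: "vec.subspace H0" using hypH0 by (simp add: hyperplane_in_def)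
      have nsub: "\<not> H0 \<subseteq> K" "\<not> H0 \<subseteq> H"
        using hyp_eq[OF hypH0 hK(1)] hyp_eq[OF hypH0 hK(2)] KH0 H by auto
      have d1: "vec.dim (H0 \<inter> K) + 1 = vec.dim H0" using dim_int_hyp_strict[OF sH0 hK(1) nsub(1)] .
      have d2: "vec.dim (H0 \<inter> H) + 1 = vec.dim H0" using dim_int_hyp_strict[OF sH0 hK(2) nsub(2)] .
      have sub: "X \<subseteq> K \<inter> H0" using KA X_def by auto
      have "X = K \<inter> H0"
        apply (rule vec.subspace_dim_equal)
        using sub d1 d2 hK sH0 unfolding X_def hyperplane_in_def
        by (auto simp: vec.subspace_inter Int_commute)
      then show ?thesis using H KA X_def by auto
    qed
  qed
qed


lemma blk_sub0: "0 < i \<Longrightarrow> i < s \<Longrightarrow> \<pi> ! i \<subseteq> A - \<pi> ! 0"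
  using A_minus by blast

lemma part2:
  assumes inj: "inj_on (\<lambda>H. R H) (A - \<pi> ! 0)" and surj: "(\<lambda>H. R H) ` (A - \<pi> ! 0) = A2"
  shows "is_partition \<pi>2 A2"
  unfolding is_partition_def
proof (intro conjI)
  show "\<forall>B\<in>set \<pi>2. B \<noteq> {}"
  proof
    fix B assume "B \<in> set \<pi>2"
    then obtain i where i: "0 < i" "i < s" "B = (\<lambda>H. R H) ` (\<pi> ! i)" using set2 by metis
    then show "B \<noteq> {}" using blk_ne[OF i(2)] by simp
  qed
  show "\<forall>i<length \<pi>2. \<forall>j<length \<pi>2. i \<noteq> j \<longrightarrow> \<pi>2 ! i \<inter> \<pi>2 ! j = {}"
  proof (intro allI impI)
    fix i j assume ij: "i < length \<pi>2" "j < length \<pi>2" "i \<noteq> j"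
    then have ij': "i < s - 1" "j < s - 1" using len2 by simp_all
    have sub: "\<pi> ! Suc i \<subseteq> A - \<pi> ! 0" "\<pi> ! Suc j \<subseteq> A - \<pi> ! 0"
      using blk_sub0 ij' by simp_all
    have d: "\<pi> ! Suc i \<inter> \<pi> ! Suc j = {}"
    proof -
      have sij: "Suc i < s" "Suc j < s" using ij' by linarith+
      then show ?thesis using blk_uniq[of "Suc i" "Suc j"] ij(3) by blast
    qed
    have "(\<lambda>H. R H) ` (\<pi> ! Suc i \<inter> \<pi> ! Suc j) = (\<lambda>H. R H) ` (\<pi> ! Suc i) \<inter> (\<lambda>H. R H) ` (\<pi> ! Suc j)"
      by (rule inj_on_image_Int[OF inj sub])
    then show "\<pi>2 ! i \<inter> \<pi>2 ! j = {}" using d nth2 ij' by simp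
  qed
  show "\<Union>(set \<pi>2) = A2"
  proof
    show "\<Union>(set \<pi>2) \<subseteq> A2"
    proof
      fix G assume "G \<in> \<Union>(set \<pi>2)"
      then obtain B where B: "B \<in> set \<pi>2" "G \<in> B" by blast
      then obtain i where i: "0 < i" "i < s" "B = (\<lambda>H. R H) ` (\<pi> ! i)" using set2 by metis
      then have "G \<in> (\<lambda>H. R H) ` (A - \<pi> ! 0)" using B(2) blk_sub0[OF i(1,2)] by blast
      then show "G \<in> A2" using surj by simp
    qed
    show "A2 \<subseteq> \<Union>(set \<pi>2)"
    proof
      fix G assume "G \<in> A2"
      then obtain H where H: "H \<in> A - \<pi> ! 0" "G = R H" using surj by blast
      then obtain i where i: "0 < i" "i < s" "H \<in> \<pi> ! i" using A_minus by blast
      then have "(\<lambda>H. R H) ` (\<pi> ! i) \<in> set \<pi>2" using set2 by metis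
      moreover have "G \<in> (\<lambda>H. R H) ` (\<pi> ! i)" using H(2) i(3) by simp
      ultimately show "G \<in> \<Union>(set \<pi>2)" by blast
    qed
  qed
qed

lemma transv_restr:
  assumes g0: "g 0 = H0"
  shows "UNIV \<inter> \<Inter>(g ` {..<s}) = H0 \<inter> \<Inter>((\<lambda>i. R (g (Suc i))) ` {..<s - 1})"
proof -
  have "\<Inter>(g ` {..<s}) = H0 \<inter> \<Inter>((\<lambda>i. g (Suc i)) ` {..<s - 1})"
    using Inter_shift[OF s_pos, of g] g0 by simp
  also have "\<dots> = H0 \<inter> \<Inter>((\<lambda>i. R (g (Suc i))) ` {..<s - 1})" by auto
  finally show ?thesis by simp
qed

lemma transv_subspace: "\<forall>i<s. g i \<in> \<pi> ! i \<Longrightarrow> vec.subspace (UNIV \<inter> \<Inter>(g ` {..<s}))"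
proof -
  assume g: "\<forall>i<s. g i \<in> \<pi> ! i"
  have "\<forall>i\<in>{..<s}. g i \<in> A" using g blk_sub by auto
  then show ?thesis using subspace_transv by simp
qed

lemma indep2:
  assumes ind: "independent_in UNIV \<pi>"
  shows "independent_in H0 \<pi>2"
  unfolding independent_in_def
proof (intro allI impI)
  fix h assume h: "\<forall>i<length \<pi>2. h i \<in> \<pi>2 ! i"
  have ex: "\<exists>H. 0 < j \<and> j < s \<longrightarrow> H \<in> \<pi> ! j \<and> h (j - 1) = R H" for j
  proof (cases "0 < j \<and> j < s")
    case True
    have jl: "j - 1 < s - 1" using True by linarith
    then have "j - 1 < length \<pi>2" using len2 by simp
    then have "h (j - 1) \<in> \<pi>2 ! (j - 1)" using h by blast
    moreover have "Suc (j - 1) = j" using True by simp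
    ultimately have "h (j - 1) \<in> (\<lambda>H. R H) ` (\<pi> ! j)" using nth2[OF jl] by simp
    then show ?thesis by blast
  next
    case False then show ?thesis by blast
  qed
  then obtain G where G: "\<And>j. 0 < j \<and> j < s \<longrightarrow> G j \<in> \<pi> ! j \<and> h (j - 1) = R (G j)"
    by metis
  define g where "g j = (if j = 0 then H0 else G j)" for j
  have g: "\<forall>i<s. g i \<in> \<pi> ! i" using G H0 unfolding g_def by simp
  have g0: "g 0 = H0" unfolding g_def by simp
  have hg: "h i = R (g (Suc i))" if "i < s - 1" for i
    using G[of "Suc i"] that unfolding g_def by simp
  have eq: "H0 \<inter> \<Inter>(h ` {..<length \<pi>2}) = UNIV \<inter> \<Inter>(g ` {..<s})"
  proof -
    have "h ` {..<length \<pi>2} = (\<lambda>i. R (g (Suc i))) ` {..<s - 1}"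
      using hg len2 by (auto intro: image_cong)
    then show ?thesis using transv_restr[of g, OF g0] by simp
  qed
  have c: "codim_in UNIV (UNIV \<inter> \<Inter>(g ` {..<s})) = s" using ind g unfolding independent_in_def by blast
  have "codim_in UNIV (UNIV \<inter> \<Inter>(g ` {..<s})) = codim_in H0 (UNIV \<inter> \<Inter>(g ` {..<s})) + 1"
    by (rule codim_bridge) (use eq transv_subspace[OF g] in auto)
  then show "codim_in H0 (H0 \<inter> \<Inter>(h ` {..<length \<pi>2})) = length \<pi>2"
    using c eq len2 by simp
qed

lemma indep3:
  assumes ind: "independent_in H0 \<pi>2" and g: "\<forall>i<s. g i \<in> \<pi> ! i" and g0: "g 0 = H0"
  shows "codim_in UNIV (UNIV \<inter> \<Inter>(g ` {..<s})) = s"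
proof -
  define h where "h i = R (g (Suc i))" for i
  have h: "\<forall>i<length \<pi>2. h i \<in> \<pi>2 ! i"
  proof (intro allI impI)
    fix i assume "i < length \<pi>2"
    then have i: "i < s - 1" using len2 by simp
    then have "g (Suc i) \<in> \<pi> ! Suc i" using g by simp
    then show "h i \<in> \<pi>2 ! i" using nth2[OF i] unfolding h_def by simp
  qed
  have c: "codim_in H0 (H0 \<inter> \<Inter>(h ` {..<length \<pi>2})) = length \<pi>2"
    using ind h unfolding independent_in_def by blast
  have eq: "H0 \<inter> \<Inter>(h ` {..<length \<pi>2}) = UNIV \<inter> \<Inter>(g ` {..<s})"
    using transv_restr[of g, OF g0] len2 unfolding h_def by simp
  have "codim_in UNIV (UNIV \<inter> \<Inter>(g ` {..<s})) = codim_in H0 (UNIV \<inter> \<Inter>(g ` {..<s})) + 1"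
    by (rule codim_bridge) (use eq transv_subspace[OF g] in auto)
  then show ?thesis using c eq len2 s_pos by simp
qed


lemma nice2:
  assumes P1: "nice_in UNIV A \<pi>" and P2: "nice_in UNIV A1 \<pi>1" and inj: "inj_on (\<lambda>H. R H) (A - \<pi> ! 0)"
    and Y: "Y \<in> lattice_in H0 A2 - {H0}"
  shows "\<exists>B\<in>set \<pi>2. card (B \<inter> localization A2 Y) = 1"
proof -
  have YL: "Y \<in> lattice_in H0 A2" and YH: "Y \<noteq> H0" using Y by simp_all
  have YA: "Y \<in> lattice_in UNIV A" "Y \<subseteq> H0" using latR_to_A[OF YL] by simp_all
  have suff: "\<exists>i. 0 < i \<and> i < s \<and> card (\<pi> ! i \<inter> localization A Y) = 1"
  proof (rule ccontr)
    assume nf: "\<not> (\<exists>i. 0 < i \<and> i < s \<and> card (\<pi> ! i \<inter> localization A Y) = 1)"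
    have Yeq: "Y = UNIV \<inter> \<Inter>(localization A Y)" by (rule lat_eq[OF YA(1)])
    have "localization A1 Y \<noteq> {}"
    proof
      assume e: "localization A1 Y = {}"
      have "localization A Y \<subseteq> {H0}" using e unfolding localization_def by blast
      then have "H0 \<subseteq> \<Inter>(localization A Y)" by blast
      then have "H0 \<subseteq> Y" using Yeq by simp
      then show False using YA(2) YH by simp
    qed
    then obtain K where K: "K \<in> A1" "Y \<subseteq> K" unfolding localization_def by blast
    have KU: "K \<noteq> UNIV" using hyp_ne_UNIV[OF hypA] K(1) by blast
    obtain Z where Z: "Z \<in> lattice_in UNIV A1 - {UNIV}" "localization A1 Z = localization A1 Y"
      using lat_closure[OF K KU] by blast
    have "\<exists>B'\<in>set \<pi>1. card (B' \<inter> localization A1 Z) = 1" using P2 Z(1) unfolding nice_in_def by blast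
    then obtain B' where B': "B' \<in> set \<pi>1" "card (B' \<inter> localization A1 Y) = 1" using Z(2) by auto
    obtain m where m: "m < s" "B' = \<pi> ! m - {H0}" using del_block[OF B'(1)] by blast
    have eqB: "B' \<inter> localization A1 Y = (\<pi> ! m \<inter> localization A Y) - {H0}"
      using m(2) loc_diff by auto
    show False
    proof (cases "m = 0")
      case False
      then have "H0 \<notin> \<pi> ! m" using H0_not m(1) by simp
      then have "B' \<inter> localization A1 Y = \<pi> ! m \<inter> localization A Y" using eqB by auto
      then show False using nf B'(2) m(1) False by auto
    next
      case True
      obtain H where H: "(\<pi> ! 0 \<inter> localization A Y) - {H0} = {H}"
        using eqB B'(2) True by (auto simp: card_1_singleton_iff)
      then have Hin: "H \<in> \<pi> ! 0 \<inter> localization A Y" "H \<noteq> H0" by auto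
      have H0in: "H0 \<in> \<pi> ! 0 \<inter> localization A Y" using H0 H0A YA(2) unfolding localization_def by simp
      have "Y \<noteq> UNIV" using YA(2) hyp_ne_UNIV[OF hypH0] by blast
      then have "Y \<in> lattice_in UNIV A - {UNIV}" using YA(1) by simp
      then obtain B where B: "B \<in> set \<pi>" "card (B \<inter> localization A Y) = 1"
        using P1 unfolding nice_in_def by blast
      then obtain j where j: "j < s" "B = \<pi> ! j" using blk_set by blast
      show False
      proof (cases "j = 0")
        case True then show False using card_ne1[OF finloc Hin(1) H0in Hin(2)] B j by simp
      next
        case False then show False using nf B j by auto
      qed
    qed
  qed
  then obtain i where i: "0 < i" "i < s" "card (\<pi> ! i \<inter> localization A Y) = 1" by blast
  have "(\<lambda>H. R H) ` (\<pi> ! i) \<in> set \<pi>2" using set2 i by metis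
  moreover have "card ((\<lambda>H. R H) ` (\<pi> ! i) \<inter> localization A2 Y) = 1"
    using card_loc_R[OF inj i(1,2) YA(2)] i(3) by simp
  ultimately show ?thesis by blast
qed

lemma dir1:
  assumes P1: "nice_in UNIV A \<pi>" and P2: "nice_in UNIV A1 \<pi>1"
  shows "bij_betw (\<lambda>H. H \<inter> H0) (A - \<pi> ! 0) A2 \<and> nice_in H0 A2 \<pi>2"
proof -
  have inj: "inj_on (\<lambda>H. R H) (A - \<pi> ! 0)" by (rule inj1[OF P1 P2])
  have surj: "(\<lambda>H. R H) ` (A - \<pi> ! 0) = A2" by (rule surj1[OF P1])
  have ind: "independent_in UNIV \<pi>" using P1 by (simp add: nice_in_def)
  have "nice_in H0 A2 \<pi>2"
    unfolding nice_in_def using part2[OF inj surj] indep2[OF ind] nice2[OF P1 P2 inj] by blast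
  then show ?thesis using inj surj unfolding bij_betw_def by simp
qed


lemma pi1_case1:
  assumes "\<pi> ! 0 = {H0}"
  shows "length \<pi>1 = s - 1" "\<And>i. i < s - 1 \<Longrightarrow> \<pi>1 ! i = \<pi> ! Suc i"
  using deletion_eq assms by (simp_all add: nth_tl)

lemma pi1_case2:
  assumes "\<pi> ! 0 \<noteq> {H0}"
  shows "length \<pi>1 = s" "\<And>i. i < s \<Longrightarrow> \<pi>1 ! i = \<pi> ! i - {H0}"
proof -
  have e: "\<pi>1 = (\<pi> ! 0 - {H0}) # tl \<pi>" using deletion_eq assms by simp
  then show "length \<pi>1 = s" using s_pos by simp
  fix i assume i: "i < s"
  show "\<pi>1 ! i = \<pi> ! i - {H0}"
  proof (cases i)
    case 0 then show ?thesis using e by simp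
  next
    case (Suc k)
    then have "\<pi>1 ! i = \<pi> ! i" using e i by (simp add: nth_tl)
    moreover have "H0 \<notin> \<pi> ! i" using H0_not Suc i by simp
    ultimately show ?thesis by simp
  qed
qed

lemma part_del: "is_partition \<pi>1 A1"
proof (cases "\<pi> ! 0 = {H0}")
  case True
  note c = pi1_case1[OF True]
  show ?thesis unfolding is_partition_def
  proof (intro conjI)
    show "\<forall>B\<in>set \<pi>1. B \<noteq> {}"
    proof
      fix B assume "B \<in> set \<pi>1"
      then obtain i where i: "i < s - 1" "B = \<pi>1 ! i" using c(1) by (metis in_set_conv_nth)
      then have "Suc i < s" by linarith
      then show "B \<noteq> {}" using blk_ne c(2)[OF i(1)] i(2) by simp
    qed
    show "\<forall>i<length \<pi>1. \<forall>j<length \<pi>1. i \<noteq> j \<longrightarrow> \<pi>1 ! i \<inter> \<pi>1 ! j = {}"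
    proof (intro allI impI)
      fix i j assume ij: "i < length \<pi>1" "j < length \<pi>1" "i \<noteq> j"
      then have ij': "i < s - 1" "j < s - 1" using c(1) by simp_all
      then have "Suc i < s" "Suc j < s" by linarith+
      then have "\<pi> ! Suc i \<inter> \<pi> ! Suc j = {}" using blk_uniq[of "Suc i" "Suc j"] ij(3) by blast
      then show "\<pi>1 ! i \<inter> \<pi>1 ! j = {}" using c(2) ij' by simp
    qed
    show "\<Union>(set \<pi>1) = A1"
    proof
      show "\<Union>(set \<pi>1) \<subseteq> A1"
      proof
        fix H assume "H \<in> \<Union>(set \<pi>1)"
        then obtain B where B: "B \<in> set \<pi>1" "H \<in> B" by blast
        then obtain i where i: "i < s - 1" "B = \<pi>1 ! i" using c(1) by (metis in_set_conv_nth)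
        then have "Suc i < s" "0 < Suc i" by linarith+
        then have "H \<in> A - \<pi> ! 0" using A_minus B(2) i(2) c(2)[OF i(1)] by blast
        then show "H \<in> A1" using True by simp
      qed
      show "A1 \<subseteq> \<Union>(set \<pi>1)"
      proof
        fix H assume "H \<in> A1"
        then have "H \<in> A - \<pi> ! 0" using True by simp
        then obtain i where i: "0 < i" "i < s" "H \<in> \<pi> ! i" using A_minus by blast
        then have il: "i - 1 < length \<pi>1" using c(1) by simp
        have "\<pi>1 ! (i - 1) = \<pi> ! i" using c(2)[of "i - 1"] i by simp
        then have "H \<in> \<pi>1 ! (i - 1)" using i(3) by simp
        then show "H \<in> \<Union>(set \<pi>1)" using il nth_mem by blast
      qed
    qed
  qed
next
  case False
  note c = pi1_case2[OF False]
  show ?thesis unfolding is_partition_def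
  proof (intro conjI)
    show "\<forall>B\<in>set \<pi>1. B \<noteq> {}"
      unfolding deletion_partition_def by simp
    show "\<forall>i<length \<pi>1. \<forall>j<length \<pi>1. i \<noteq> j \<longrightarrow> \<pi>1 ! i \<inter> \<pi>1 ! j = {}"
    proof (intro allI impI)
      fix i j assume ij: "i < length \<pi>1" "j < length \<pi>1" "i \<noteq> j"
      then have ij': "i < s" "j < s" using c(1) by simp_all
      then have "\<pi> ! i \<inter> \<pi> ! j = {}" using blk_uniq[of i j] ij(3) by blast
      then show "\<pi>1 ! i \<inter> \<pi>1 ! j = {}" using c(2) ij' by auto
    qed
    show "\<Union>(set \<pi>1) = A1"
    proof
      show "\<Union>(set \<pi>1) \<subseteq> A1"
      proof
        fix H assume "H \<in> \<Union>(set \<pi>1)"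
        then obtain B where B: "B \<in> set \<pi>1" "H \<in> B" by blast
        then obtain m where "m < s" "B = \<pi> ! m - {H0}" using del_block by blast
        then show "H \<in> A1" using blk_sub B(2) by blast
      qed
      show "A1 \<subseteq> \<Union>(set \<pi>1)"
      proof
        fix H assume H: "H \<in> A1"
        then obtain i where i: "i < s" "H \<in> \<pi> ! i" using cover by blast
        then have "H \<in> \<pi>1 ! i" using c(2) H by simp
        moreover have "i < length \<pi>1" using c(1) i by simp
        ultimately show "H \<in> \<Union>(set \<pi>1)" using nth_mem by blast
      qed
    qed
  qed
qed


lemma indep_del:
  assumes ind: "independent_in UNIV \<pi>"
  shows "independent_in UNIV \<pi>1"
proof (cases "\<pi> ! 0 = {H0}")
  case True
  note c = pi1_case1[OF True]
  show ?thesis unfolding independent_in_def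
  proof (intro allI impI)
    fix h assume h: "\<forall>i<length \<pi>1. h i \<in> \<pi>1 ! i"
    have hb: "h k \<in> \<pi> ! Suc k" if k: "k < s - 1" for k
    proof -
      have "k < length \<pi>1" using k c(1) by simp
      then have "h k \<in> \<pi>1 ! k" using h by blast
      then show ?thesis using c(2)[OF k] by simp
    qed
    define g where "g j = (if j = 0 then H0 else h (j - 1))" for j
    have g: "\<forall>i<s. g i \<in> \<pi> ! i"
    proof (intro allI impI)
      fix i assume i: "i < s"
      show "g i \<in> \<pi> ! i"
      proof (cases i)
        case 0 then show ?thesis using H0 unfolding g_def by simp
      next
        case (Suc k)
        then have k: "k < s - 1" using i by simp
        then show ?thesis using hb[OF k] Suc unfolding g_def by simp
      qed
    qed
    have cg: "codim_in UNIV (UNIV \<inter> \<Inter>(g ` {..<s})) = s" using ind g unfolding independent_in_def by blast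
    have eqg: "\<Inter>(g ` {..<s}) = H0 \<inter> \<Inter>(h ` {..<s - 1})"
      using Inter_shift[OF s_pos, of g] unfolding g_def by simp
    define Y where "Y = \<Inter>(h ` {..<s - 1})"
    have hA: "\<forall>i\<in>{..<s - 1}. h i \<in> A"
    proof
      fix i assume "i \<in> {..<s - 1}"
      then have "i < s - 1" by simp
      moreover then have "Suc i < s" by linarith
      ultimately show "h i \<in> A" using hb blk_sub by blast
    qed
    have sY: "vec.subspace Y" using subspace_transv[OF hA] Y_def by simp
    have d1: "vec.dim Y \<le> vec.dim (Y \<inter> H0) + 1" by (rule dim_int_hyp[OF sY hypH0])
    have hyps: "\<forall>H\<in>h ` {..<s - 1}. hyperplane_in UNIV H" using hA hypA by blast
    have d2: "vec.dim (UNIV::('k^'n) set) \<le> vec.dim Y + card (h ` {..<s - 1})"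
      using codim_card[OF _ hyps] Y_def by simp
    have d4: "card (h ` {..<s - 1}) \<le> s - 1" using card_image_le[of "{..<s - 1}" h] by simp
    have d3: "vec.dim (UNIV::('k^'n) set) - vec.dim (Y \<inter> H0) = s"
      using cg eqg Y_def unfolding codim_in_def by (simp add: Int_commute)
    have "vec.dim (UNIV::('k^'n) set) - vec.dim Y = s - 1" using d1 d2 d3 d4 s_pos by arith
    then show "codim_in UNIV (UNIV \<inter> \<Inter>(h ` {..<length \<pi>1})) = length \<pi>1"
      unfolding codim_in_def c(1) Y_def by simp
  qed
next
  case False
  note c = pi1_case2[OF False]
  show ?thesis unfolding independent_in_def
  proof (intro allI impI)
    fix h assume h: "\<forall>i<length \<pi>1. h i \<in> \<pi>1 ! i"
    then have "\<forall>i<s. h i \<in> \<pi> ! i" using c by auto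
    then show "codim_in UNIV (UNIV \<inter> \<Inter>(h ` {..<length \<pi>1})) = length \<pi>1"
      using ind c(1) unfolding independent_in_def by simp
  qed
qed

lemma X_ne_H0:
  assumes "X \<in> lattice_in UNIV A1" "X \<noteq> UNIV"
  shows "X \<noteq> H0"
proof
  assume XH: "X = H0"
  obtain C where C: "C \<subseteq> A1" "X = UNIV \<inter> \<Inter>C" using assms(1) unfolding lattice_in_def by blast
  have "C \<noteq> {}" using C assms(2) by auto
  then obtain H where H: "H \<in> C" by blast
  then have "H0 \<subseteq> H" using C XH by blast
  moreover have "H \<in> A" "H \<noteq> H0" using H C(1) by auto
  ultimately show False using hyp_eq[OF hypH0 hypA] by blast
qed

lemma nice_del:
  assumes P1: "nice_in UNIV A \<pi>" and inj: "inj_on (\<lambda>H. R H) (A - \<pi> ! 0)"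
    and N3: "\<forall>X\<in>lattice_in H0 A2 - {H0}. \<exists>B\<in>set \<pi>2. card (B \<inter> localization A2 X) = 1"
  shows "\<forall>X\<in>lattice_in UNIV A1 - {UNIV}. \<exists>B\<in>set \<pi>1. card (B \<inter> localization A1 X) = 1"
proof
  fix X assume X: "X \<in> lattice_in UNIV A1 - {UNIV}"
  have XL: "X \<in> lattice_in UNIV A1" and XU: "X \<noteq> UNIV" using X by simp_all
  have XA: "X \<in> lattice_in UNIV A" using lat_mono[of A1 A] XL by blast
  have suff: "\<exists>i<s. card (\<pi> ! i \<inter> localization A X) = 1 \<and> H0 \<notin> \<pi> ! i \<inter> localization A X"
  proof -
    have "X \<in> lattice_in UNIV A - {UNIV}" using XA XU by simp
    then obtain B where B: "B \<in> set \<pi>" "card (B \<inter> localization A X) = 1"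
      using P1 unfolding nice_in_def by blast
    then obtain m where m: "m < s" "B = \<pi> ! m" using blk_set by blast
    show ?thesis
    proof (cases "H0 \<in> \<pi> ! m \<inter> localization A X")
      case False then show ?thesis using m B by blast
    next
      case True
      then have XH0: "X \<subseteq> H0" unfolding localization_def by simp
      have XR: "X \<in> lattice_in H0 A2" by (rule lat_to_R[OF XA XH0])
      have "X \<noteq> H0" by (rule X_ne_H0[OF XL XU])
      then obtain B'' where B'': "B'' \<in> set \<pi>2" "card (B'' \<inter> localization A2 X) = 1"
        using N3 XR by blast
      then obtain j where j: "0 < j" "j < s" "B'' = (\<lambda>H. R H) ` (\<pi> ! j)" using set2 by metis
      have "card (\<pi> ! j \<inter> localization A X) = 1" using card_loc_R[OF inj j(1,2) XH0] B''(2) j(3) by simp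
      moreover have "H0 \<notin> \<pi> ! j" using H0_not j by simp
      ultimately show ?thesis using j(2) by blast
    qed
  qed
  then obtain i where i: "i < s" "card (\<pi> ! i \<inter> localization A X) = 1" "H0 \<notin> \<pi> ! i \<inter> localization A X"
    by blast
  have eq: "(\<pi> ! i - {H0}) \<inter> localization A1 X = \<pi> ! i \<inter> localization A X"
    using loc_diff i(3) by auto
  have ne: "\<pi> ! i - {H0} \<noteq> {}"
  proof
    assume e: "\<pi> ! i - {H0} = {}"
    have "\<pi> ! i \<inter> localization A X = {}" using eq unfolding e by simp
    then show False using i(2) by simp
  qed
  have "\<pi> ! i - {H0} \<in> set \<pi>1" by (rule del_block_in[OF i(1) ne])
  then show "\<exists>B\<in>set \<pi>1. card (B \<inter> localization A1 X) = 1" using eq i(2) by metis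
qed

lemma dir2:
  assumes P1: "nice_in UNIV A \<pi>"
    and P3: "bij_betw (\<lambda>H. H \<inter> H0) (A - \<pi> ! 0) A2 \<and> nice_in H0 A2 \<pi>2"
  shows "nice_in UNIV A1 \<pi>1"
proof -
  have inj: "inj_on (\<lambda>H. R H) (A - \<pi> ! 0)" using P3 unfolding bij_betw_def by simp
  have N3: "\<forall>X\<in>lattice_in H0 A2 - {H0}. \<exists>B\<in>set \<pi>2. card (B \<inter> localization A2 X) = 1"
    using P3 unfolding nice_in_def by simp
  have ind: "independent_in UNIV \<pi>" using P1 by (simp add: nice_in_def)
  show ?thesis unfolding nice_in_def
    using part_del indep_del[OF ind] nice_del[OF P1 inj N3] by blast
qed

lemma dir3:
  assumes P2: "nice_in UNIV A1 \<pi>1"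
    and P3: "bij_betw (\<lambda>H. H \<inter> H0) (A - \<pi> ! 0) A2 \<and> nice_in H0 A2 \<pi>2"
  shows "nice_in UNIV A \<pi>"
proof -
  have inj: "inj_on (\<lambda>H. R H) (A - \<pi> ! 0)" using P3 unfolding bij_betw_def by simp
  have N3: "\<forall>X\<in>lattice_in H0 A2 - {H0}. \<exists>B\<in>set \<pi>2. card (B \<inter> localization A2 X) = 1"
    using P3 unfolding nice_in_def by simp
  have ind3: "independent_in H0 \<pi>2" using P3 unfolding nice_in_def by simp
  have ind1: "independent_in UNIV \<pi>1" using P2 unfolding nice_in_def by simp
  have N2: "\<forall>X\<in>lattice_in UNIV A1 - {UNIV}. \<exists>B\<in>set \<pi>1. card (B \<inter> localization A1 X) = 1"
    using P2 unfolding nice_in_def by simp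
  have ind: "independent_in UNIV \<pi>"
    unfolding independent_in_def
  proof (intro allI impI)
    fix g assume g: "\<forall>i<s. g i \<in> \<pi> ! i"
    show "codim_in UNIV (UNIV \<inter> \<Inter>(g ` {..<s})) = s"
    proof (cases "g 0 = H0")
      case True then show ?thesis using indep3[OF ind3 g] by simp
    next
      case False
      have "g 0 \<in> \<pi> ! 0" using g s_pos by simp
      then have ne: "\<pi> ! 0 \<noteq> {H0}" using False by auto
      note c = pi1_case2[OF ne]
      have "\<forall>i<length \<pi>1. g i \<in> \<pi>1 ! i"
      proof (intro allI impI)
        fix i assume "i < length \<pi>1"
        then have i: "i < s" using c(1) by simp
        have "g i \<noteq> H0"
        proof (cases "i = 0")
          case True then show ?thesis using False by simp
        next
          case False then show ?thesis using H0_not[of i] i g by auto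
        qed
        then show "g i \<in> \<pi>1 ! i" using c(2)[OF i] g i by simp
      qed
      then show ?thesis using ind1 c(1) unfolding independent_in_def by metis
    qed
  qed
  have nice: "\<forall>X\<in>lattice_in UNIV A - {UNIV}. \<exists>B\<in>set \<pi>. card (B \<inter> localization A X) = 1"
  proof
    fix X assume X: "X \<in> lattice_in UNIV A - {UNIV}"
    have XA: "X \<in> lattice_in UNIV A" and XU: "X \<noteq> UNIV" using X by simp_all
    show "\<exists>B\<in>set \<pi>. card (B \<inter> localization A X) = 1"
    proof (cases "H0 \<in> localization A X")
      case False
      have "X \<in> lattice_in UNIV A1" by (rule lat_to_A1[OF XA False])
      then obtain B' where B': "B' \<in> set \<pi>1" "card (B' \<inter> localization A1 X) = 1"
        using N2 XU by blast
      then obtain m where m: "m < s" "B' = \<pi> ! m - {H0}" using del_block by blast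
      have "B' \<inter> localization A1 X = \<pi> ! m \<inter> localization A X"
        using m(2) loc_diff False by auto
      then show ?thesis using B'(2) m(1) nth_mem by metis
    next
      case True
      then have XH0: "X \<subseteq> H0" unfolding localization_def by simp
      show ?thesis
      proof (cases "X = H0")
        case True
        have "\<pi> ! 0 \<inter> localization A X = {H0}"
        proof
          show "{H0} \<subseteq> \<pi> ! 0 \<inter> localization A X" using H0 H0A True unfolding localization_def by simp
          show "\<pi> ! 0 \<inter> localization A X \<subseteq> {H0}"
          proof
            fix H assume "H \<in> \<pi> ! 0 \<inter> localization A X"
            then have "H \<in> A" "H0 \<subseteq> H" using True unfolding localization_def by auto
            then show "H \<in> {H0}" using hyp_eq[OF hypH0 hypA] by blast
          qed
        qed
        moreover have "\<pi> ! 0 \<in> set \<pi>" using s_pos by simp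
        ultimately show ?thesis by (intro bexI[of _ "\<pi> ! 0"]) simp_all
      next
        case False
        have "X \<in> lattice_in H0 A2" by (rule lat_to_R[OF XA XH0])
        then obtain B'' where B'': "B'' \<in> set \<pi>2" "card (B'' \<inter> localization A2 X) = 1"
          using N3 False by blast
        then obtain j where j: "0 < j" "j < s" "B'' = (\<lambda>H. R H) ` (\<pi> ! j)" using set2 by metis
        have "card (\<pi> ! j \<inter> localization A X) = 1" using card_loc_R[OF inj j(1,2) XH0] B''(2) j(3) by simp
        then show ?thesis using j(2) nth_mem by metis
      qed
    qed
  qed
  show ?thesis unfolding nice_in_def using part ind nice by blast
qed

end


theorem theorem3p5:
  fixes A :: "('k::field ^ 'n) set set"
    and \<pi> :: "('k ^ 'n) set set list"
    and H0 :: "('k ^ 'n) set"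
  assumes arr: "central_arrangement_in UNIV A"
    and nonempty: "A \<noteq> {}"
    and part: "is_partition \<pi> A"
    and H0: "\<pi> \<noteq> []" "H0 \<in> \<pi> ! 0"
  defines "P1 \<equiv> nice_in UNIV A \<pi>"
    and "P2 \<equiv> nice_in UNIV (A - {H0}) (deletion_partition \<pi> H0)"
    and "P3 \<equiv> bij_betw (\<lambda>H. H \<inter> H0) (A - \<pi> ! 0) (restriction_arr A H0) \<and>
              nice_in H0 (restriction_arr A H0) (restriction_partition \<pi> H0)"
  shows "(P1 \<and> P2 \<longrightarrow> P3) \<and> (P1 \<and> P3 \<longrightarrow> P2) \<and> (P2 \<and> P3 \<longrightarrow> P1)"
proof -
  interpret ctx A \<pi> H0 using arr part H0 by unfold_locales
  have 1: "P1 \<and> P2 \<longrightarrow> P3" unfolding P1_def P2_def P3_def using dir1 by blast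
  have 2: "P1 \<and> P3 \<longrightarrow> P2" unfolding P1_def P2_def P3_def using dir2 by blast
  have 3: "P2 \<and> P3 \<longrightarrow> P1" unfolding P1_def P2_def P3_def using dir3 by blast
  show ?thesis using 1 2 3 by blast
qed

end
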